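(* Let $(M^n,g)$, $n>3$, be a quasi-conformally flat weakly Ricci symmetric manifold with associated 1-forms $A,B,D$ and nowhere-vanishing scalar curvature $\gamma$, with $T=B-D$ nowhere zero. Then $M$ is a manifold of hyper quasi-constant curvature: $\bar R(X,Y,Z,W)=l[g(Y,Z)g(X,W)-g(X,Z)g(Y,W)]+g(X,W)P(Y,Z)-g(X,Z)P(Y,W)+g(Y,Z)P(X,W)-g(Y,W)P(X,Z)$ with $l=\frac{\gamma}{n}\left[\frac{1}{n-1}+\frac{2b}{a}\right]$ and $P=\delta(B\otimes B-B\otimes D-D\otimes B+D\otimes D)$, $\delta=-\frac{b}{a}\frac{\gamma}{T(\rho)}$, $g(X,\rho)=T(X)$.
   Context: A non-flat Riemannian manifold $(M^n,g)$, $n>2$, is weakly Ricci symmetric if its Ricci tensor $S$ satisfies $(\nabla_XS)(Z,U)=A(X)S(Z,U)+B(Z)S(X,U)+D(U)S(X,Z)$ for all vector fields, where $A,B,D$ are 1-forms, not all zero. $\bar R(X,Y,Z,W)=g(R(X,Y)Z,W)$. The quasi-conformal curvature tensor is $C^*(X,Y)Z=aR(X,Y)Z+b[S(Y,Z)X-S(X,Z)Y+g(Y,Z)QX-g(X,Z)QY]-\frac{\gamma}{n}\left[\frac{a}{n-1}+2b\right][g(Y,Z)X-g(X,Z)Y]$, $a\neq0,b$ constants, $Q$ the Ricci operator, $\gamma$ the scalar curvature; quasi-conformally flat means $C^*=0$. A manifold of hyper quasi-constant curvature has curvature tensor of the displayed form with a non-zero scalar and a $(0,2)$ tensor $P$.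 *)

theory Defs
  imports "HOL-Analysis.Analysis"
begin

(* Riemannian manifold rendered in a single coordinate chart: an open set U of real^'n
   with metric components g x i j.  Vectors / 1-forms at a point are elements of real^'n
   (components w.r.t. the coordinate frame / coframe). *)

definition pd :: "(real^'n \<Rightarrow> real) \<Rightarrow> 'n \<Rightarrow> real^'n \<Rightarrow> real" where
  "pd f i x = frechet_derivative f (at x) (axis i 1)"

fun Ck :: "nat \<Rightarrow> (real^'n) set \<Rightarrow> (real^'n \<Rightarrow> real) \<Rightarrow> bool" where
  "Ck 0 U f = continuous_on U f"
| "Ck (Suc k) U f = (f differentiable_on U \<and> (\<forall>i. Ck k U (pd f i)))"

definition smooth_on :: "(real^'n) set \<Rightarrow> (real^'n \<Rightarrow> real) \<Rightarrow> bool" where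
  "smooth_on U f = (\<forall>k. Ck k U f)"

definition riemannian_metric :: "(real^'n) set \<Rightarrow> (real^'n \<Rightarrow> 'n \<Rightarrow> 'n \<Rightarrow> real) \<Rightarrow> bool" where
  "riemannian_metric U g =
     (open U \<and> (\<forall>i j. smooth_on U (\<lambda>x. g x i j))
      \<and> (\<forall>x\<in>U. \<forall>i j. g x i j = g x j i)
      \<and> (\<forall>x\<in>U. \<forall>v::real^'n. v \<noteq> 0 \<longrightarrow> (\<Sum>i\<in>UNIV. \<Sum>j\<in>UNIV. g x i j * v$i * v$j) > 0))"

definition ginv :: "(real^'n \<Rightarrow> 'n \<Rightarrow> 'n \<Rightarrow> real) \<Rightarrow> real^'n \<Rightarrow> 'n \<Rightarrow> 'n \<Rightarrow> real" where
  "ginv g x i j = matrix_inv (\<chi> a b. g x a b) $ i $ j"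

definition Chr :: "(real^'n \<Rightarrow> 'n \<Rightarrow> 'n \<Rightarrow> real) \<Rightarrow> 'n \<Rightarrow> 'n \<Rightarrow> 'n \<Rightarrow> real^'n \<Rightarrow> real" where
  "Chr g k i j x = (1/2) * (\<Sum>l\<in>UNIV. ginv g x k l *
      (pd (\<lambda>y. g y j l) i x + pd (\<lambda>y. g y i l) j x - pd (\<lambda>y. g y i j) l x))"

(* R(d_i,d_j)d_k = Riem l i j k d_l, with R(X,Y)Z = nabla_X nabla_Y Z - nabla_Y nabla_X Z - nabla_[X,Y] Z *)
definition Riem :: "(real^'n \<Rightarrow> 'n \<Rightarrow> 'n \<Rightarrow> real) \<Rightarrow> 'n \<Rightarrow> 'n \<Rightarrow> 'n \<Rightarrow> 'n \<Rightarrow> real^'n \<Rightarrow> real" where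
  "Riem g l i j k x = pd (\<lambda>y. Chr g l j k y) i x - pd (\<lambda>y. Chr g l i k y) j x
     + (\<Sum>m\<in>UNIV. Chr g l i m x * Chr g m j k x - Chr g l j m x * Chr g m i k x)"

definition gval :: "(real^'n \<Rightarrow> 'n \<Rightarrow> 'n \<Rightarrow> real) \<Rightarrow> real^'n \<Rightarrow> real^'n \<Rightarrow> real^'n \<Rightarrow> real" where
  "gval g x X Y = (\<Sum>i\<in>UNIV. \<Sum>j\<in>UNIV. g x i j * X$i * Y$j)"

definition curv_op :: "(real^'n \<Rightarrow> 'n \<Rightarrow> 'n \<Rightarrow> real) \<Rightarrow> real^'n \<Rightarrow> real^'n \<Rightarrow> real^'n \<Rightarrow> real^'n \<Rightarrow> real^'n" where
  "curv_op g x X Y Z = (\<chi> l. \<Sum>i\<in>UNIV. \<Sum>j\<in>UNIV. \<Sum>k\<in>UNIV. Riem g l i j k x * X$i * Y$j * Z$k)"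

definition Rbar :: "(real^'n \<Rightarrow> 'n \<Rightarrow> 'n \<Rightarrow> real) \<Rightarrow> real^'n \<Rightarrow> real^'n \<Rightarrow> real^'n \<Rightarrow> real^'n \<Rightarrow> real^'n \<Rightarrow> real" where
  "Rbar g x X Y Z W = gval g x (curv_op g x X Y Z) W"

definition Ric :: "(real^'n \<Rightarrow> 'n \<Rightarrow> 'n \<Rightarrow> real) \<Rightarrow> 'n \<Rightarrow> 'n \<Rightarrow> real^'n \<Rightarrow> real" where
  "Ric g j k x = (\<Sum>i\<in>UNIV. Riem g i i j k x)"

definition ricci :: "(real^'n \<Rightarrow> 'n \<Rightarrow> 'n \<Rightarrow> real) \<Rightarrow> real^'n \<Rightarrow> real^'n \<Rightarrow> real^'n \<Rightarrow> real" where
  "ricci g x Y Z = (\<Sum>j\<in>UNIV. \<Sum>k\<in>UNIV. Ric g j k x * Y$j * Z$k)"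

(* Ricci operator Q: g(QX,Y) = S(X,Y) *)
definition ricci_op :: "(real^'n \<Rightarrow> 'n \<Rightarrow> 'n \<Rightarrow> real) \<Rightarrow> real^'n \<Rightarrow> real^'n \<Rightarrow> real^'n" where
  "ricci_op g x X = (\<chi> i. \<Sum>j\<in>UNIV. \<Sum>k\<in>UNIV. ginv g x i j * Ric g j k x * X$k)"

definition scal :: "(real^'n \<Rightarrow> 'n \<Rightarrow> 'n \<Rightarrow> real) \<Rightarrow> real^'n \<Rightarrow> real" where
  "scal g x = (\<Sum>j\<in>UNIV. \<Sum>k\<in>UNIV. ginv g x j k * Ric g j k x)"

(* components of nabla S: (nabla_{d_i} S)(d_j,d_k) *)
definition nablaRic :: "(real^'n \<Rightarrow> 'n \<Rightarrow> 'n \<Rightarrow> real) \<Rightarrow> 'n \<Rightarrow> 'n \<Rightarrow> 'n \<Rightarrow> real^'n \<Rightarrow> real" where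
  "nablaRic g i j k x = pd (\<lambda>y. Ric g j k y) i x
     - (\<Sum>m\<in>UNIV. Chr g m i j x * Ric g m k x + Chr g m i k x * Ric g j m x)"

definition nabla_ricci :: "(real^'n \<Rightarrow> 'n \<Rightarrow> 'n \<Rightarrow> real) \<Rightarrow> real^'n \<Rightarrow> real^'n \<Rightarrow> real^'n \<Rightarrow> real^'n \<Rightarrow> real" where
  "nabla_ricci g x X Z W = (\<Sum>i\<in>UNIV. \<Sum>j\<in>UNIV. \<Sum>k\<in>UNIV. nablaRic g i j k x * X$i * Z$j * W$k)"

definition oneform :: "(real^'n \<Rightarrow> real^'n) \<Rightarrow> real^'n \<Rightarrow> real^'n \<Rightarrow> real" where
  "oneform A x X = (\<Sum>i\<in>UNIV. A x $ i * X $ i)"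

definition non_flat :: "(real^'n) set \<Rightarrow> (real^'n \<Rightarrow> 'n \<Rightarrow> 'n \<Rightarrow> real) \<Rightarrow> bool" where
  "non_flat U g = (\<exists>x\<in>U. \<exists>X Y Z. curv_op g x X Y Z \<noteq> 0)"

definition weakly_ricci_symmetric ::
  "(real^'n) set \<Rightarrow> (real^'n \<Rightarrow> 'n \<Rightarrow> 'n \<Rightarrow> real) \<Rightarrow> (real^'n \<Rightarrow> real^'n) \<Rightarrow> (real^'n \<Rightarrow> real^'n) \<Rightarrow> (real^'n \<Rightarrow> real^'n) \<Rightarrow> bool" where
  "weakly_ricci_symmetric U g A B D =
     ((\<forall>x\<in>U. \<forall>X Z W. nabla_ricci g x X Z W =
         oneform A x X * ricci g x Z W + oneform B x Z * ricci g x X W + oneform D x W * ricci g x X Z)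
      \<and> (\<exists>x\<in>U. A x \<noteq> 0 \<or> B x \<noteq> 0 \<or> D x \<noteq> 0))"

definition qc_curv :: "(real^'n \<Rightarrow> 'n \<Rightarrow> 'n \<Rightarrow> real) \<Rightarrow> real \<Rightarrow> real \<Rightarrow> real^'n \<Rightarrow> real^'n \<Rightarrow> real^'n \<Rightarrow> real^'n \<Rightarrow> real^'n" where
  "qc_curv g a b x X Y Z =
     a *\<^sub>R curv_op g x X Y Z
     + b *\<^sub>R (ricci g x Y Z *\<^sub>R X - ricci g x X Z *\<^sub>R Y + gval g x Y Z *\<^sub>R ricci_op g x X - gval g x X Z *\<^sub>R ricci_op g x Y)
     - (scal g x / real CARD('n) * (a / (real CARD('n) - 1) + 2 * b)) *\<^sub>R (gval g x Y Z *\<^sub>R X - gval g x X Z *\<^sub>R Y)"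

definition quasi_conformally_flat :: "(real^'n) set \<Rightarrow> (real^'n \<Rightarrow> 'n \<Rightarrow> 'n \<Rightarrow> real) \<Rightarrow> real \<Rightarrow> real \<Rightarrow> bool" where
  "quasi_conformally_flat U g a b = (\<forall>x\<in>U. \<forall>X Y Z. qc_curv g a b x X Y Z = 0)"

(* the vector field rho with g(X,rho) = T(X), i.e. rho^i = g^{ij} T_j *)
definition dual_vec :: "(real^'n \<Rightarrow> 'n \<Rightarrow> 'n \<Rightarrow> real) \<Rightarrow> (real^'n \<Rightarrow> real^'n) \<Rightarrow> real^'n \<Rightarrow> real^'n" where
  "dual_vec g T x = (\<chi> i. \<Sum>j\<in>UNIV. ginv g x i j * T x $ j)"

end

theory Submission
  imports Defs
begin

lemma pd_cong:
  assumes "open U" "x \<in> U" "\<And>y. y \<in> U \<Longrightarrow> f y = h y"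
  shows "pd f i x = pd h i x"
proof -
  have "(\<lambda>f'. (f has_derivative f') (at x)) = (\<lambda>f'. (h has_derivative f') (at x))"
    using assms by (intro ext iffI) (auto intro: has_derivative_transform_within_open)
  then show ?thesis unfolding pd_def frechet_derivative_def by simp
qed

lemma pd_eq: "(f has_derivative F) (at x) \<Longrightarrow> pd f i x = F (axis i 1)"
  unfolding pd_def using frechet_derivative_at by metis

lemma pd_has: "f differentiable at x \<Longrightarrow> (f has_derivative (\<lambda>v. frechet_derivative f (at x) v)) (at x)"
  using frechet_derivative_works by auto

lemma pd_add:
  assumes "f differentiable at x" "h differentiable at x"
  shows "pd (\<lambda>y. f y + h y) i x = pd f i x + pd h i x"
  using pd_eq[OF has_derivative_add[OF pd_has[OF assms(1)] pd_has[OF assms(2)]]]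
  by (simp add: pd_def)

lemma pd_diff:
  assumes "f differentiable at x" "h differentiable at x"
  shows "pd (\<lambda>y. f y - h y) i x = pd f i x - pd h i x"
  using pd_eq[OF has_derivative_diff[OF pd_has[OF assms(1)] pd_has[OF assms(2)]]]
  by (simp add: pd_def)

lemma pd_mult:
  fixes f h :: "real^'n \<Rightarrow> real"
  assumes "f differentiable at x" "h differentiable at x"
  shows "pd (\<lambda>y. f y * h y) i x = pd f i x * h x + f x * pd h i x"
  using pd_eq[OF has_derivative_mult[OF pd_has[OF assms(1)] pd_has[OF assms(2)]]]
  by (simp add: pd_def)

lemma pd_cmult:
  fixes f :: "real^'n \<Rightarrow> real"
  assumes "f differentiable at x"
  shows "pd (\<lambda>y. c * f y) i x = c * pd f i x"
  using pd_eq[OF has_derivative_mult_right[OF pd_has[OF assms(1)]]]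
  by (simp add: pd_def)

lemma pd_const: "pd (\<lambda>y. c) i x = 0"
  unfolding pd_def by simp

lemma pd_sum:
  fixes f :: "'a \<Rightarrow> real^'n \<Rightarrow> real"
  assumes "finite S" "\<And>a. a \<in> S \<Longrightarrow> f a differentiable at x"
  shows "pd (\<lambda>y. \<Sum>a\<in>S. f a y) i x = (\<Sum>a\<in>S. pd (f a) i x)"
  using pd_eq[OF has_derivative_sum[of S f "\<lambda>a v. frechet_derivative (f a) (at x) v", OF pd_has[OF assms(2)]]]
  by (simp add: pd_def)

lemma line_deriv:
  fixes f :: "real^'n \<Rightarrow> real"
  assumes "f differentiable at (z + t *\<^sub>R axis i 1)"
  shows "((\<lambda>s. f (z + s *\<^sub>R axis i 1)) has_real_derivative pd f i (z + t *\<^sub>R axis i 1)) (at t)"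
proof -
  let ?F = "frechet_derivative f (at (z + t *\<^sub>R axis i 1))"
  have F: "(f has_derivative ?F) (at (z + t *\<^sub>R axis i 1))"
    using assms frechet_derivative_works by blast
  have lin: "linear ?F" using F has_derivative_linear by blast
  have inner: "((\<lambda>s. z + s *\<^sub>R axis i 1) has_derivative (\<lambda>s. s *\<^sub>R axis i 1)) (at t)"
    by (auto intro!: derivative_eq_intros)
  have "((\<lambda>s. f (z + s *\<^sub>R axis i 1)) has_derivative (\<lambda>s. ?F (s *\<^sub>R axis i 1))) (at t)"
    using has_derivative_compose[OF inner F] by (simp add: o_def)
  moreover have "(\<lambda>s. ?F (s *\<^sub>R axis i 1)) = (*) (pd f i (z + t *\<^sub>R axis i 1))"
    using linear_scale[OF lin] by (auto simp: pd_def)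
  ultimately show ?thesis unfolding has_field_derivative_def by simp
qed

lemma norm_two_axis:
  fixes s u :: real
  shows "norm (s *\<^sub>R axis i (1::real) + u *\<^sub>R axis j 1) \<le> \<bar>s\<bar> + \<bar>u\<bar>"
proof -
  have "norm (s *\<^sub>R axis i (1::real) + u *\<^sub>R axis j 1) \<le> norm (s *\<^sub>R axis i (1::real)) + norm (u *\<^sub>R axis j (1::real))"
    by (rule norm_triangle_ineq)
  also have "norm (s *\<^sub>R axis i (1::real)) = \<bar>s\<bar>" by simp
  also have "norm (u *\<^sub>R axis j (1::real)) = \<bar>u\<bar>" by simp
  finally show ?thesis .
qed

lemma dist_add_self: "dist x (x + v) = norm (v::'a::real_normed_vector)"
  by (simp add: dist_norm)

lemma mvt_real:
  fixes \<phi> \<phi>' :: "real \<Rightarrow> real"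
  assumes h: "0 < h" and der: "\<And>s. 0 \<le> s \<Longrightarrow> s \<le> h \<Longrightarrow> (\<phi> has_real_derivative \<phi>' s) (at s)"
  shows "\<exists>s. 0 < s \<and> s < h \<and> \<phi> h - \<phi> 0 = h * \<phi>' s"
proof -
  have c: "continuous_on {0..h} \<phi>"
  proof (rule continuous_at_imp_continuous_on, rule ballI)
    fix s assume "s \<in> {0..h}"
    then show "isCont \<phi> s" using der[of s] by (intro DERIV_isCont) auto
  qed
  have dd: "\<phi> differentiable (at s)" if "0 < s" "s < h" for s
    using der[of s] that unfolding real_differentiable_def by auto
  obtain l z where lz: "0 < z" "z < h" "DERIV \<phi> z :> l" "\<phi> h - \<phi> 0 = (h - 0) * l"
    using MVT[OF h c dd] by blast
  have "l = \<phi>' z" using DERIV_unique[OF lz(3) der[of z]] lz(1,2) by simp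
  then show ?thesis using lz by auto
qed

lemma mixed_mvt:
  fixes f :: "real^'n \<Rightarrow> real"
  assumes sub: "cball x (2*h) \<subseteq> U" and h: "0 < h"
    and d: "\<And>y. y\<in>U \<Longrightarrow> f differentiable at y"
    and di: "\<And>y. y\<in>U \<Longrightarrow> pd f i differentiable at y"
  shows "\<exists>\<xi>. dist x \<xi> \<le> 2*h \<and>
     f (x + h *\<^sub>R axis i 1 + h *\<^sub>R axis j 1) - f (x + h *\<^sub>R axis i 1) - f (x + h *\<^sub>R axis j 1) + f x
       = h * h * pd (pd f i) j \<xi>"
proof -
  let ?ei = "axis i (1::real)" and ?ej = "axis j (1::real)"
  have inU: "x + s *\<^sub>R ?ei + u *\<^sub>R ?ej \<in> U" if "0 \<le> s" "s \<le> h" "0 \<le> u" "u \<le> h" for s u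
  proof -
    have "norm (s *\<^sub>R ?ei + u *\<^sub>R ?ej) \<le> 2*h"
      using norm_two_axis[of s i u j] that by auto
    then have "x + s *\<^sub>R ?ei + u *\<^sub>R ?ej \<in> cball x (2*h)"
      unfolding mem_cball add.assoc dist_add_self .
    then show ?thesis using sub by auto
  qed
  define \<phi> where "\<phi> s = f (x + s *\<^sub>R ?ei + h *\<^sub>R ?ej) - f (x + s *\<^sub>R ?ei)" for s
  have "(\<phi> has_real_derivative (pd f i (x + s *\<^sub>R ?ei + h *\<^sub>R ?ej) - pd f i (x + s *\<^sub>R ?ei))) (at s)"
    if "0 \<le> s" "s \<le> h" for s
  proof -
    have e1: "x + h *\<^sub>R ?ej + s *\<^sub>R ?ei = x + s *\<^sub>R ?ei + h *\<^sub>R ?ej" for s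
      by (simp add: algebra_simps)
    have 1: "((\<lambda>s. f (x + h *\<^sub>R ?ej + s *\<^sub>R ?ei)) has_real_derivative pd f i (x + h *\<^sub>R ?ej + s *\<^sub>R ?ei)) (at s)"
    proof (rule line_deriv)
      show "f differentiable at (x + h *\<^sub>R ?ej + s *\<^sub>R ?ei)"
        unfolding e1 using d inU[of s h] that h by auto
    qed
    have 2: "((\<lambda>s. f (x + s *\<^sub>R ?ei)) has_real_derivative pd f i (x + s *\<^sub>R ?ei)) (at s)"
      by (rule line_deriv) (use d inU[of s 0] that h in auto)
    show ?thesis using DERIV_diff[OF 1 2] unfolding \<phi>_def e1 .
  qed
  then obtain s0 where s0: "0 < s0" "s0 < h"
    "\<phi> h - \<phi> 0 = h * (pd f i (x + s0 *\<^sub>R ?ei + h *\<^sub>R ?ej) - pd f i (x + s0 *\<^sub>R ?ei))"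
    using mvt_real[OF h, of \<phi> "\<lambda>s. pd f i (x + s *\<^sub>R ?ei + h *\<^sub>R ?ej) - pd f i (x + s *\<^sub>R ?ei)"] by blast
  define \<psi> where "\<psi> u = pd f i (x + s0 *\<^sub>R ?ei + u *\<^sub>R ?ej)" for u
  have "(\<psi> has_real_derivative pd (pd f i) j (x + s0 *\<^sub>R ?ei + u *\<^sub>R ?ej)) (at u)"
    if "0 \<le> u" "u \<le> h" for u
    unfolding \<psi>_def by (rule line_deriv) (use di inU[of s0 u] that s0 in auto)
  then obtain u0 where u0: "0 < u0" "u0 < h"
    "\<psi> h - \<psi> 0 = h * pd (pd f i) j (x + s0 *\<^sub>R ?ei + u0 *\<^sub>R ?ej)"
    using mvt_real[OF h, of \<psi> "\<lambda>u. pd (pd f i) j (x + s0 *\<^sub>R ?ei + u *\<^sub>R ?ej)"] by blast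
  show ?thesis
  proof (intro exI conjI)
    show "dist x (x + s0 *\<^sub>R ?ei + u0 *\<^sub>R ?ej) \<le> 2*h"
      using norm_two_axis[of s0 i u0 j] s0 u0 unfolding add.assoc dist_add_self by simp
    show "f (x + h *\<^sub>R ?ei + h *\<^sub>R ?ej) - f (x + h *\<^sub>R ?ei) - f (x + h *\<^sub>R ?ej) + f x
       = h * h * pd (pd f i) j (x + s0 *\<^sub>R ?ei + u0 *\<^sub>R ?ej)"
    proof -
      have "\<phi> h - \<phi> 0 = f (x + h *\<^sub>R ?ei + h *\<^sub>R ?ej) - f (x + h *\<^sub>R ?ei) - f (x + h *\<^sub>R ?ej) + f x"
        unfolding \<phi>_def by simp
      moreover have "\<psi> h - \<psi> 0 = pd f i (x + s0 *\<^sub>R ?ei + h *\<^sub>R ?ej) - pd f i (x + s0 *\<^sub>R ?ei)"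
        unfolding \<psi>_def by simp
      ultimately show ?thesis by (simp only: s0(3) u0(3) mult.assoc)
    qed
  qed
qed

lemma half_contra: "(a::real) < c/2 \<Longrightarrow> b < c/2 \<Longrightarrow> c \<le> a + b \<Longrightarrow> False"
  by linarith

lemma schwarz:
  fixes f :: "real^'n \<Rightarrow> real"
  assumes U: "open U" "x \<in> U"
    and d: "\<And>y. y\<in>U \<Longrightarrow> f differentiable at y"
    and di: "\<And>y. y\<in>U \<Longrightarrow> pd f i differentiable at y"
    and dj: "\<And>y. y\<in>U \<Longrightarrow> pd f j differentiable at y"
    and ci: "continuous_on U (pd (pd f i) j)" and cj: "continuous_on U (pd (pd f j) i)"
  shows "pd (pd f i) j x = pd (pd f j) i x"
proof (rule ccontr)
  let ?c1 = "pd (pd f i) j x" and ?c2 = "pd (pd f j) i x"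
  assume ne: "?c1 \<noteq> ?c2"
  define e where "e = \<bar>?c1 - ?c2\<bar> / 2"
  have e: "e > 0" using ne by (simp add: e_def)
  obtain r where r: "r > 0" "cball x r \<subseteq> U" using U open_contains_cball by blast
  have "isCont (pd (pd f i) j) x" using ci U continuous_on_eq_continuous_at by blast
  then obtain d1 where d1: "d1 > 0" "\<And>y. dist y x < d1 \<Longrightarrow> dist (pd (pd f i) j y) ?c1 < e"
    using e unfolding continuous_at_eps_delta by blast
  have "isCont (pd (pd f j) i) x" using cj U continuous_on_eq_continuous_at by blast
  then obtain d2 where d2: "d2 > 0" "\<And>y. dist y x < d2 \<Longrightarrow> dist (pd (pd f j) i y) ?c2 < e"
    using e unfolding continuous_at_eps_delta by blast
  define h where "h = min r (min d1 d2) / 4"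
  have h: "h > 0" "cball x (2*h) \<subseteq> U" "2*h < d1" "2*h < d2"
    using r d1 d2 by (auto simp: h_def)
  obtain \<xi> where \<xi>: "dist x \<xi> \<le> 2*h"
    "f (x + h *\<^sub>R axis i 1 + h *\<^sub>R axis j 1) - f (x + h *\<^sub>R axis i 1) - f (x + h *\<^sub>R axis j 1) + f x
       = h * h * pd (pd f i) j \<xi>"
    using mixed_mvt[OF h(2) h(1) d di] by blast
  obtain \<eta> where \<eta>: "dist x \<eta> \<le> 2*h"
    "f (x + h *\<^sub>R axis j 1 + h *\<^sub>R axis i 1) - f (x + h *\<^sub>R axis j 1) - f (x + h *\<^sub>R axis i 1) + f x
       = h * h * pd (pd f j) i \<eta>"
    using mixed_mvt[OF h(2) h(1) d dj] by blast
  have "h * h * pd (pd f i) j \<xi> = h * h * pd (pd f j) i \<eta>"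
    using \<xi>(2) \<eta>(2) by (simp add: algebra_simps)
  then have eq: "pd (pd f i) j \<xi> = pd (pd f j) i \<eta>" using h(1) by simp
  have "dist (pd (pd f i) j \<xi>) ?c1 < e" using d1(2)[of \<xi>] \<xi>(1) h by (simp add: dist_commute)
  moreover have "dist (pd (pd f j) i \<eta>) ?c2 < e" using d2(2)[of \<eta>] \<eta>(1) h by (simp add: dist_commute)
  ultimately have "\<bar>pd (pd f j) i \<eta> - ?c1\<bar> < e" "\<bar>pd (pd f j) i \<eta> - ?c2\<bar> < e"
    using eq by (simp_all add: dist_real_def)
  moreover have "\<bar>?c1 - ?c2\<bar> \<le> \<bar>pd (pd f j) i \<eta> - ?c1\<bar> + \<bar>pd (pd f j) i \<eta> - ?c2\<bar>"
    using abs_triangle_ineq[of "?c1 - pd (pd f j) i \<eta>" "pd (pd f j) i \<eta> - ?c2"]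
    by (simp add: abs_minus_commute)
  ultimately show False unfolding e_def using half_contra by blast
qed



lemma Ck_mono_Suc: "Ck (Suc k) U f \<Longrightarrow> Ck k U f"
proof (induction k arbitrary: f)
  case 0
  then show ?case by (simp add: differentiable_imp_continuous_on)
next
  case (Suc k)
  then show ?case by simp
qed

lemma sum_delta_l: "(\<Sum>l\<in>(UNIV::'n::finite set). (if j = l then 1 else 0) * (f l::real)) = f j"
proof -
  have "(\<Sum>l\<in>UNIV. (if j = l then 1 else 0) * f l) = (\<Sum>l\<in>(UNIV::'n set). if j = l then f l else 0)"
    by (rule sum.cong) auto
  then show ?thesis by simp
qed

lemma sum_delta_r: "(\<Sum>l\<in>(UNIV::'n::finite set). (f l::real) * (if j = l then 1 else 0)) = f j"
  using sum_delta_l[of j f] by (simp add: mult.commute)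

lemma differentiable_prod':
  fixes f :: "'i \<Rightarrow> 'a::real_normed_vector \<Rightarrow> real"
  assumes "\<And>i. i \<in> I \<Longrightarrow> f i differentiable at x"
  shows "(\<lambda>y. \<Prod>i\<in>I. f i y) differentiable at x"
proof -
  have "((\<lambda>y. \<Prod>i\<in>I. f i y) has_derivative
      (\<lambda>v. \<Sum>i\<in>I. frechet_derivative (f i) (at x) v * (\<Prod>j\<in>I - {i}. f j x))) (at x)"
  proof (rule has_derivative_prod)
    fix i assume "i \<in> I"
    then show "(f i has_derivative frechet_derivative (f i) (at x)) (at x)"
      using assms frechet_derivative_works by blast
  qed
  then show ?thesis by (rule differentiableI)
qed

lemma det_differentiable:
  fixes M :: "'a::real_normed_vector \<Rightarrow> real^'n^'n"
  assumes "\<And>a b. (\<lambda>y. M y $ a $ b) differentiable at x"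
  shows "(\<lambda>y. det (M y)) differentiable at x"
proof -
  have "\<And>p. (\<lambda>y. of_int (sign p) * (\<Prod>i\<in>UNIV. M y $ i $ p i)) differentiable at x"
    by (rule differentiable_mult[OF differentiable_const differentiable_prod']) (rule assms)
  then show ?thesis unfolding det_def by (intro differentiable_sum) auto
qed

lemma differentiable_transform_open:
  assumes "f differentiable at x" "open U" "x \<in> U" "\<And>y. y \<in> U \<Longrightarrow> f y = h y"
  shows "h differentiable at x"
proof -
  from assms(1) obtain D where "(f has_derivative D) (at x)" unfolding differentiable_def by blast
  then have "(h has_derivative D) (at x)" by (rule has_derivative_transform_within_open[OF _ assms(2,3,4)])
  then show ?thesis by (rule differentiableI)
qed

lemma sum_delta_r2: "(\<Sum>l\<in>(UNIV::'n::finite set). (f l::real) * (if l = j then 1 else 0)) = f j"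
  using sum_delta_r[of f j] by (simp add: eq_commute[of j])

context
  fixes U :: "(real^'n) set" and g :: "real^'n \<Rightarrow> 'n \<Rightarrow> 'n \<Rightarrow> real"
  assumes rm: "riemannian_metric U g"
begin

lemma rm_open: "open U" using rm by (simp add: riemannian_metric_def)

lemma rm_sym: "y \<in> U \<Longrightarrow> g y i j = g y j i" using rm by (simp add: riemannian_metric_def)

lemma rm_pos: "y \<in> U \<Longrightarrow> v \<noteq> 0 \<Longrightarrow> (\<Sum>i\<in>UNIV. \<Sum>j\<in>UNIV. g y i j * v$i * v$j) > 0"
  using rm by (simp add: riemannian_metric_def)

lemma rm_C3: "Ck 3 U (\<lambda>y. g y i j)"
  using rm by (simp add: riemannian_metric_def smooth_on_def)

lemma dg0: "y \<in> U \<Longrightarrow> (\<lambda>y. g y i j) differentiable at y"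
  using rm_C3[of i j] rm_open by (simp add: numeral_3_eq_3 differentiable_on_eq_differentiable_at)

lemma dg1: "y \<in> U \<Longrightarrow> pd (\<lambda>y. g y i j) k differentiable at y"
  using rm_C3[of i j] rm_open by (simp add: numeral_3_eq_3 differentiable_on_eq_differentiable_at)

lemma dg2c: "continuous_on U (pd (pd (\<lambda>y. g y i j) k) l)"
  using rm_C3[of i j] rm_open by (simp add: numeral_3_eq_3 differentiable_imp_continuous_on)

lemma dg_schwarz: "x \<in> U \<Longrightarrow> pd (pd (\<lambda>y. g y i j) k) l x = pd (pd (\<lambda>y. g y i j) l) k x"
  by (rule schwarz[OF rm_open]) (auto intro: dg0 dg1 dg2c)

lemma dg_sym: "x \<in> U \<Longrightarrow> pd (\<lambda>y. g y i j) k x = pd (\<lambda>y. g y j i) k x"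
  by (rule pd_cong[OF rm_open]) (auto intro: rm_sym)

lemma G_inv:
  assumes "y \<in> U"
  shows "invertible (\<chi> a b. g y a b)"
proof -
  have "\<forall>v. (\<chi> a b. g y a b) *v v = 0 \<longrightarrow> v = 0"
  proof (intro allI impI)
    fix v :: "real^'n"
    assume "(\<chi> a b. g y a b) *v v = 0"
    then have z: "\<And>i. (\<Sum>j\<in>UNIV. g y i j * v$j) = 0"
      by (simp add: matrix_vector_mult_def vec_eq_iff)
    have "(\<Sum>i\<in>UNIV. \<Sum>j\<in>UNIV. g y i j * v$i * v$j) = (\<Sum>i\<in>UNIV. v$i * (\<Sum>j\<in>UNIV. g y i j * v$j))"
      by (simp add: sum_distrib_left mult_ac)
    also have "\<dots> = 0" using z by simp
    finally show "v = 0" using rm_pos[OF assms, of v] by auto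
  qed
  then show ?thesis
    unfolding invertible_left_inverse matrix_left_invertible_ker .
qed

lemma G_inv_mult:
  assumes "y \<in> U"
  shows "(\<chi> a b. g y a b) ** matrix_inv (\<chi> a b. g y a b) = mat 1"
        "matrix_inv (\<chi> a b. g y a b) ** (\<chi> a b. g y a b) = mat 1"
proof -
  have "\<exists>A'. (\<chi> a b. g y a b) ** A' = mat 1 \<and> A' ** (\<chi> a b. g y a b) = mat 1"
    using G_inv[OF assms] unfolding invertible_def .
  from someI_ex[OF this] show "(\<chi> a b. g y a b) ** matrix_inv (\<chi> a b. g y a b) = mat 1"
        "matrix_inv (\<chi> a b. g y a b) ** (\<chi> a b. g y a b) = mat 1"
    unfolding matrix_inv_def by auto
qed

lemma ginv_left: "y \<in> U \<Longrightarrow> (\<Sum>k\<in>UNIV. ginv g y i k * g y k j) = (if i = j then 1 else 0)"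
  using G_inv_mult(2)[of y]
  by (simp add: ginv_def matrix_matrix_mult_def mat_def vec_eq_iff)

lemma ginv_right: "y \<in> U \<Longrightarrow> (\<Sum>k\<in>UNIV. g y i k * ginv g y k j) = (if i = j then 1 else 0)"
  using G_inv_mult(1)[of y]
  by (simp add: ginv_def matrix_matrix_mult_def mat_def vec_eq_iff)

lemma ginv_sym:
  assumes y: "y \<in> U"
  shows "ginv g y i j = ginv g y j i"
proof -
  have "ginv g y i j = (\<Sum>l\<in>UNIV. (if j = l then 1 else 0) * ginv g y i l)"
    by (rule sum_delta_l[symmetric])
  also have "\<dots> = (\<Sum>l\<in>UNIV. (\<Sum>k\<in>UNIV. ginv g y j k * g y k l) * ginv g y i l)"
    using ginv_left[OF y] by simp
  also have "\<dots> = (\<Sum>l\<in>UNIV. \<Sum>k\<in>UNIV. ginv g y j k * g y k l * ginv g y i l)"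
    by (simp add: sum_distrib_right)
  also have "\<dots> = (\<Sum>k\<in>UNIV. \<Sum>l\<in>UNIV. ginv g y j k * g y k l * ginv g y i l)"
    by (rule sum.swap)
  also have "\<dots> = (\<Sum>k\<in>UNIV. ginv g y j k * (\<Sum>l\<in>UNIV. ginv g y i l * g y l k))"
    by (intro sum.cong refl) (simp add: sum_distrib_left rm_sym[OF y, of _ k for k] mult_ac)
  also have "\<dots> = (\<Sum>k\<in>UNIV. ginv g y j k * (if i = k then 1 else 0))"
    using ginv_left[OF y] by simp
  also have "\<dots> = ginv g y j i"
    by (rule sum_delta_r)
  finally show ?thesis .
qed

lemma ginv_cramer:
  assumes y: "y \<in> U"
  shows "ginv g y i j = det (\<chi> a b. if b = i then axis j 1 $ a else g y a b) / det (\<chi> a b. g y a b)"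
proof -
  let ?A = "\<chi> a b. g y a b"
  let ?H = "matrix_inv ?A"
  have "?A *v (?H *v axis j 1) = axis j 1"
    by (simp add: matrix_vector_mul_assoc G_inv_mult[OF y])
  moreover have "det ?A \<noteq> 0" using G_inv[OF y] invertible_det_nz by blast
  ultimately have "?H *v axis j 1 = (\<chi> k. det(\<chi> a b. if b = k then axis j 1 $ a else ?A $ a $ b) / det ?A)"
    using cramer by blast
  then have "(?H *v axis j 1) $ i = det(\<chi> a b. if b = i then axis j 1 $ a else ?A $ a $ b) / det ?A"
    by simp
  moreover have "(?H *v axis j 1) $ i = ginv g y i j"
    unfolding matrix_vector_mult_def ginv_def axis_def by (simp add: sum_delta_r2)
  moreover have eqm: "(\<chi> a b. if b = i then axis j 1 $ a else ?A $ a $ b) = (\<chi> a b. if b = i then axis j 1 $ a else g y a b)"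
    by (simp add: vec_eq_iff)
  ultimately show ?thesis by (simp only: eqm)
qed

lemma ginv_diff:
  assumes x: "x \<in> U"
  shows "(\<lambda>y. ginv g y i j) differentiable at x"
proof (rule differentiable_transform_open[OF _ rm_open x])
  show "(\<lambda>y. det (\<chi> a b. if b = i then axis j 1 $ a else g y a b) / det (\<chi> a b. g y a b)) differentiable at x"
  proof (intro differentiable_divide det_differentiable)
    fix a b
    show "(\<lambda>y. (\<chi> a b. if b = i then axis j 1 $ a else g y a b) $ a $ b) differentiable at x"
      using dg0[OF x, of a b] by (cases "b = i") simp_all
    show "(\<lambda>y. (\<chi> a b. g y a b) $ a $ b) differentiable at x"
      using dg0[OF x, of a b] by simp
    show "det (\<chi> a b. g x a b) \<noteq> 0" using G_inv[OF x] invertible_det_nz by blast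
  qed
  show "\<And>y. y \<in> U \<Longrightarrow> det (\<chi> a b. if b = i then axis j 1 $ a else g y a b) / det (\<chi> a b. g y a b) = ginv g y i j"
    using ginv_cramer by simp
qed

lemma dginv_aux:
  assumes x: "x \<in> U"
  shows "(\<Sum>b\<in>UNIV. pd (\<lambda>y. ginv g y i b) k x * g x b m) = - (\<Sum>b\<in>UNIV. ginv g x i b * pd (\<lambda>y. g y b m) k x)"
proof -
  have "pd (\<lambda>y. \<Sum>b\<in>UNIV. ginv g y i b * g y b m) k x = pd (\<lambda>y. if i = m then 1 else 0) k x"
    by (rule pd_cong[OF rm_open x]) (simp add: ginv_left)
  also have "\<dots> = 0" by (rule pd_const)
  finally have "pd (\<lambda>y. \<Sum>b\<in>UNIV. ginv g y i b * g y b m) k x = 0" .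
  moreover have "pd (\<lambda>y. \<Sum>b\<in>UNIV. ginv g y i b * g y b m) k x
      = (\<Sum>b\<in>UNIV. pd (\<lambda>y. ginv g y i b * g y b m) k x)"
    by (rule pd_sum) (auto intro!: differentiable_mult ginv_diff dg0 x)
  moreover have "\<And>b. pd (\<lambda>y. ginv g y i b * g y b m) k x
      = pd (\<lambda>y. ginv g y i b) k x * g x b m + ginv g x i b * pd (\<lambda>y. g y b m) k x"
    by (rule pd_mult) (auto intro!: ginv_diff dg0 x)
  ultimately show ?thesis by (simp add: sum.distrib eq_neg_iff_add_eq_0)
qed

lemma dginv:
  assumes x: "x \<in> U"
  shows "pd (\<lambda>y. ginv g y i l) k x
     = - (\<Sum>m\<in>UNIV. \<Sum>b\<in>UNIV. ginv g x i b * pd (\<lambda>y. g y b m) k x * ginv g x m l)"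
proof -
  have "pd (\<lambda>y. ginv g y i l) k x = (\<Sum>b\<in>UNIV. pd (\<lambda>y. ginv g y i b) k x * (if b = l then 1 else 0))"
    by (simp add: sum_delta_r[where j=l and f="\<lambda>b. pd (\<lambda>y. ginv g y i b) k x", symmetric] eq_commute[of l])
  also have "\<dots> = (\<Sum>b\<in>UNIV. pd (\<lambda>y. ginv g y i b) k x * (\<Sum>m\<in>UNIV. g x b m * ginv g x m l))"
    using ginv_right[OF x] by simp
  also have "\<dots> = (\<Sum>b\<in>UNIV. \<Sum>m\<in>UNIV. pd (\<lambda>y. ginv g y i b) k x * g x b m * ginv g x m l)"
    by (simp add: sum_distrib_left mult_ac)
  also have "\<dots> = (\<Sum>m\<in>UNIV. \<Sum>b\<in>UNIV. pd (\<lambda>y. ginv g y i b) k x * g x b m * ginv g x m l)"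
    by (rule sum.swap)
  also have "\<dots> = (\<Sum>m\<in>UNIV. (\<Sum>b\<in>UNIV. pd (\<lambda>y. ginv g y i b) k x * g x b m) * ginv g x m l)"
    by (simp add: sum_distrib_right)
  also have "\<dots> = (\<Sum>m\<in>UNIV. (- (\<Sum>b\<in>UNIV. ginv g x i b * pd (\<lambda>y. g y b m) k x)) * ginv g x m l)"
    using dginv_aux[OF x] by simp
  also have "\<dots> = - (\<Sum>m\<in>UNIV. \<Sum>b\<in>UNIV. ginv g x i b * pd (\<lambda>y. g y b m) k x * ginv g x m l)"
    by (simp add: sum_distrib_right sum_negf)
  finally show ?thesis .
qed

end


lemma sum3_rev:
  "(\<Sum>a\<in>A. \<Sum>b\<in>B. \<Sum>c\<in>C. (F a b c :: real)) = (\<Sum>c\<in>C. \<Sum>b\<in>B. \<Sum>a\<in>A. F a b c)"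
proof -
  have "(\<Sum>a\<in>A. \<Sum>b\<in>B. \<Sum>c\<in>C. F a b c) = (\<Sum>a\<in>A. \<Sum>c\<in>C. \<Sum>b\<in>B. F a b c)"
    by (intro sum.cong refl sum.swap)
  also have "\<dots> = (\<Sum>c\<in>C. \<Sum>a\<in>A. \<Sum>b\<in>B. F a b c)"
    by (rule sum.swap)
  also have "\<dots> = (\<Sum>c\<in>C. \<Sum>b\<in>B. \<Sum>a\<in>A. F a b c)"
    by (intro sum.cong refl sum.swap)
  finally show ?thesis .
qed

lemma sum4_rev:
  "(\<Sum>a\<in>A. \<Sum>b\<in>B. \<Sum>c\<in>C. \<Sum>d\<in>D. (F a b c d :: real)) = (\<Sum>d\<in>D. \<Sum>c\<in>C. \<Sum>b\<in>B. \<Sum>a\<in>A. F a b c d)"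
proof -
  have "(\<Sum>a\<in>A. \<Sum>b\<in>B. \<Sum>c\<in>C. \<Sum>d\<in>D. F a b c d) = (\<Sum>a\<in>A. \<Sum>d\<in>D. \<Sum>c\<in>C. \<Sum>b\<in>B. F a b c d)"
    by (intro sum.cong refl sum3_rev)
  also have "\<dots> = (\<Sum>d\<in>D. \<Sum>a\<in>A. \<Sum>c\<in>C. \<Sum>b\<in>B. F a b c d)"
    by (rule sum.swap)
  also have "\<dots> = (\<Sum>d\<in>D. \<Sum>c\<in>C. \<Sum>a\<in>A. \<Sum>b\<in>B. F a b c d)"
    by (intro sum.cong refl sum.swap)
  also have "\<dots> = (\<Sum>d\<in>D. \<Sum>c\<in>C. \<Sum>b\<in>B. \<Sum>a\<in>A. F a b c d)"
    by (intro sum.cong refl sum.swap)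
  finally show ?thesis .
qed

lemma quad_sym:
  fixes h :: "'n::finite \<Rightarrow> 'n \<Rightarrow> real" and d :: "'n \<Rightarrow> 'n \<Rightarrow> 'n \<Rightarrow> real"
  assumes hs: "\<And>a b. h a b = h b a"
  shows "(\<Sum>i\<in>UNIV. \<Sum>l\<in>UNIV. (\<Sum>m\<in>UNIV. \<Sum>b\<in>UNIV. h i b * d b m k * h m l) * d i l j)
       = (\<Sum>i\<in>UNIV. \<Sum>l\<in>UNIV. (\<Sum>m\<in>UNIV. \<Sum>b\<in>UNIV. h i b * d b m j * h m l) * d i l k)"
proof -
  have L: "(\<Sum>i\<in>UNIV. \<Sum>l\<in>UNIV. (\<Sum>m\<in>UNIV. \<Sum>b\<in>UNIV. h i b * d b m k * h m l) * d i l j)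
     = (\<Sum>i\<in>UNIV. \<Sum>l\<in>UNIV. \<Sum>m\<in>UNIV. \<Sum>b\<in>UNIV. h i b * d b m k * h m l * d i l j)"
    by (simp add: sum_distrib_right)
  have R: "(\<Sum>i\<in>UNIV. \<Sum>l\<in>UNIV. (\<Sum>m\<in>UNIV. \<Sum>b\<in>UNIV. h i b * d b m j * h m l) * d i l k)
     = (\<Sum>i\<in>UNIV. \<Sum>l\<in>UNIV. \<Sum>m\<in>UNIV. \<Sum>b\<in>UNIV. h b i * d i l k * h l m * d b m j)"
    unfolding sum_distrib_right by (intro sum.cong refl) (simp add: hs[of i b for i b] hs[of m l for m l] mult_ac)
  have R2: "(\<Sum>i\<in>UNIV. \<Sum>l\<in>UNIV. \<Sum>m\<in>UNIV. \<Sum>b\<in>UNIV. h b i * d i l k * h l m * d b m j)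
     = (\<Sum>b\<in>UNIV. \<Sum>m\<in>UNIV. \<Sum>l\<in>UNIV. \<Sum>i\<in>UNIV. h b i * d i l k * h l m * d b m j)"
    by (rule sum4_rev)
  show ?thesis using L R R2 by simp
qed

context
  fixes U :: "(real^'n) set" and g :: "real^'n \<Rightarrow> 'n \<Rightarrow> 'n \<Rightarrow> real"
  assumes rm: "riemannian_metric U g"
begin

lemma Chr_sym: "y \<in> U \<Longrightarrow> Chr g l a b y = Chr g l b a y"
  unfolding Chr_def using dg_sym[OF rm, of y a b] by (simp add: add.commute)

lemma dChr_sym: "x \<in> U \<Longrightarrow> pd (\<lambda>y. Chr g l a b y) c x = pd (\<lambda>y. Chr g l b a y) c x"
  by (rule pd_cong[OF rm_open[OF rm]]) (auto intro: Chr_sym)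

lemma Chr_diff:
  assumes x: "x \<in> U"
  shows "(\<lambda>y. Chr g k i j y) differentiable at x"
proof -
  have "\<And>l. (\<lambda>y. ginv g y k l * (pd (\<lambda>y. g y j l) i y + pd (\<lambda>y. g y i l) j y - pd (\<lambda>y. g y i j) l y)) differentiable at x"
    by (intro differentiable_mult differentiable_add differentiable_diff ginv_diff[OF rm x] dg1[OF rm x])
  then have "(\<lambda>y. 1/2 * (\<Sum>l\<in>UNIV. ginv g y k l * (pd (\<lambda>y. g y j l) i y + pd (\<lambda>y. g y i l) j y - pd (\<lambda>y. g y i j) l y))) differentiable at x"
    by (intro differentiable_mult[OF differentiable_const] differentiable_sum) auto
  then show ?thesis unfolding Chr_def .
qed

lemma F_eq:
  assumes y: "y \<in> U"
  shows "(\<Sum>i\<in>UNIV. Chr g i i j y) = 1/2 * (\<Sum>i\<in>UNIV. \<Sum>l\<in>UNIV. ginv g y i l * pd (\<lambda>y. g y i l) j y)"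
proof -
  have S1: "(\<Sum>i\<in>UNIV. \<Sum>l\<in>UNIV. ginv g y i l * pd (\<lambda>y. g y i j) l y)
          = (\<Sum>l\<in>UNIV. \<Sum>i\<in>UNIV. ginv g y i l * pd (\<lambda>y. g y i j) l y)"
    by (rule sum.swap)
  also have "\<dots> = (\<Sum>i\<in>UNIV. \<Sum>l\<in>UNIV. ginv g y i l * pd (\<lambda>y. g y j l) i y)"
    by (intro sum.cong refl) (simp add: ginv_sym[OF rm y, of _ l for l] dg_sym[OF rm y, of j])
  finally have S: "(\<Sum>i\<in>UNIV. \<Sum>l\<in>UNIV. ginv g y i l * pd (\<lambda>y. g y i j) l y)
          = (\<Sum>i\<in>UNIV. \<Sum>l\<in>UNIV. ginv g y i l * pd (\<lambda>y. g y j l) i y)" .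
  have "(\<Sum>i\<in>UNIV. Chr g i i j y) = 1/2 * ((\<Sum>i\<in>UNIV. \<Sum>l\<in>UNIV. ginv g y i l * pd (\<lambda>y. g y j l) i y)
       + (\<Sum>i\<in>UNIV. \<Sum>l\<in>UNIV. ginv g y i l * pd (\<lambda>y. g y i l) j y)
       - (\<Sum>i\<in>UNIV. \<Sum>l\<in>UNIV. ginv g y i l * pd (\<lambda>y. g y i j) l y))"
    unfolding Chr_def by (simp add: sum_distrib_left sum.distrib sum_subtractf algebra_simps)
  then show ?thesis using S by simp
qed

lemma Ric_diff_eq:
  assumes x: "x \<in> U"
  shows "Ric g j k x - Ric g k j x = (\<Sum>i\<in>UNIV. pd (\<lambda>y. Chr g i i j y) k x) - (\<Sum>i\<in>UNIV. pd (\<lambda>y. Chr g i i k y) j x)"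
proof -
  have RicE: "\<And>j k. Ric g j k x = (\<Sum>i\<in>UNIV. pd (\<lambda>y. Chr g i j k y) i x) - (\<Sum>i\<in>UNIV. pd (\<lambda>y. Chr g i i k y) j x)
      + ((\<Sum>i\<in>UNIV. \<Sum>m\<in>UNIV. Chr g i i m x * Chr g m j k x) - (\<Sum>i\<in>UNIV. \<Sum>m\<in>UNIV. Chr g i j m x * Chr g m i k x))"
    unfolding Ric_def Riem_def by (simp add: sum.distrib sum_subtractf)
  have A: "(\<Sum>i\<in>UNIV. pd (\<lambda>y. Chr g i j k y) i x) = (\<Sum>i\<in>UNIV. pd (\<lambda>y. Chr g i k j y) i x)"
    by (intro sum.cong refl dChr_sym x)
  have Q1: "(\<Sum>i\<in>UNIV. \<Sum>m\<in>UNIV. Chr g i i m x * Chr g m j k x) = (\<Sum>i\<in>UNIV. \<Sum>m\<in>UNIV. Chr g i i m x * Chr g m k j x)"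
    by (intro sum.cong refl) (simp add: Chr_sym[OF x, of _ j k])
  have "(\<Sum>i\<in>UNIV. \<Sum>m\<in>UNIV. Chr g i k m x * Chr g m i j x) = (\<Sum>m\<in>UNIV. \<Sum>i\<in>UNIV. Chr g i k m x * Chr g m i j x)"
    by (rule sum.swap)
  also have "\<dots> = (\<Sum>i\<in>UNIV. \<Sum>m\<in>UNIV. Chr g i j m x * Chr g m i k x)"
    by (intro sum.cong refl) (simp add: Chr_sym[OF x] mult.commute)
  finally have Q2: "(\<Sum>i\<in>UNIV. \<Sum>m\<in>UNIV. Chr g i k m x * Chr g m i j x) = (\<Sum>i\<in>UNIV. \<Sum>m\<in>UNIV. Chr g i j m x * Chr g m i k x)" .
  show ?thesis using RicE[of j k] RicE[of k j] A Q1 Q2 by simp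
qed

lemma dF:
  assumes x: "x \<in> U"
  shows "(\<Sum>i\<in>UNIV. pd (\<lambda>y. Chr g i i j y) k x) = 1/2 * (\<Sum>i\<in>UNIV. \<Sum>l\<in>UNIV.
      pd (\<lambda>y. ginv g y i l) k x * pd (\<lambda>y. g y i l) j x + ginv g x i l * pd (pd (\<lambda>y. g y i l) j) k x)"
proof -
  have dd: "\<And>i l. (\<lambda>y. ginv g y i l * pd (\<lambda>y. g y i l) j y) differentiable at x"
    by (rule differentiable_mult[OF ginv_diff[OF rm x] dg1[OF rm x]])
  have dd2: "\<And>i. (\<lambda>y. \<Sum>l\<in>UNIV. ginv g y i l * pd (\<lambda>y. g y i l) j y) differentiable at x"
    using dd by (intro differentiable_sum) auto
  have dd3: "(\<lambda>y. \<Sum>i\<in>UNIV. \<Sum>l\<in>UNIV. ginv g y i l * pd (\<lambda>y. g y i l) j y) differentiable at x"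
    using dd2 by (intro differentiable_sum) auto
  have "(\<Sum>i\<in>UNIV. pd (\<lambda>y. Chr g i i j y) k x) = pd (\<lambda>y. \<Sum>i\<in>UNIV. Chr g i i j y) k x"
    by (rule pd_sum[symmetric]) (auto intro: Chr_diff x)
  also have "\<dots> = pd (\<lambda>y. 1/2 * (\<Sum>i\<in>UNIV. \<Sum>l\<in>UNIV. ginv g y i l * pd (\<lambda>y. g y i l) j y)) k x"
    by (rule pd_cong[OF rm_open[OF rm] x]) (rule F_eq)
  also have "\<dots> = 1/2 * pd (\<lambda>y. \<Sum>i\<in>UNIV. \<Sum>l\<in>UNIV. ginv g y i l * pd (\<lambda>y. g y i l) j y) k x"
    by (rule pd_cmult[OF dd3])
  also have "pd (\<lambda>y. \<Sum>i\<in>UNIV. \<Sum>l\<in>UNIV. ginv g y i l * pd (\<lambda>y. g y i l) j y) k x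
      = (\<Sum>i\<in>UNIV. pd (\<lambda>y. \<Sum>l\<in>UNIV. ginv g y i l * pd (\<lambda>y. g y i l) j y) k x)"
    by (rule pd_sum) (use dd2 in auto)
  also have "\<dots> = (\<Sum>i\<in>UNIV. \<Sum>l\<in>UNIV. pd (\<lambda>y. ginv g y i l * pd (\<lambda>y. g y i l) j y) k x)"
    by (intro sum.cong refl pd_sum) (use dd in auto)
  also have "\<dots> = (\<Sum>i\<in>UNIV. \<Sum>l\<in>UNIV.
      pd (\<lambda>y. ginv g y i l) k x * pd (\<lambda>y. g y i l) j x + ginv g x i l * pd (pd (\<lambda>y. g y i l) j) k x)"
    by (intro sum.cong refl pd_mult ginv_diff[OF rm x] dg1[OF rm x])
  finally show ?thesis .
qed

lemma Ric_sym:
  assumes x: "x \<in> U"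
  shows "Ric g j k x = Ric g k j x"
proof -
  have N: "\<And>k j. (\<Sum>i\<in>UNIV. \<Sum>l\<in>UNIV. pd (\<lambda>y. ginv g y i l) k x * pd (\<lambda>y. g y i l) j x)
     = - (\<Sum>i\<in>UNIV. \<Sum>l\<in>UNIV. (\<Sum>m\<in>UNIV. \<Sum>b\<in>UNIV. ginv g x i b * pd (\<lambda>y. g y b m) k x * ginv g x m l) * pd (\<lambda>y. g y i l) j x)"
    by (simp add: dginv[OF rm x] sum_negf)
  have T1: "(\<Sum>i\<in>UNIV. \<Sum>l\<in>UNIV. pd (\<lambda>y. ginv g y i l) k x * pd (\<lambda>y. g y i l) j x)
      = (\<Sum>i\<in>UNIV. \<Sum>l\<in>UNIV. pd (\<lambda>y. ginv g y i l) j x * pd (\<lambda>y. g y i l) k x)"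
    unfolding N using quad_sym[of "\<lambda>a b. ginv g x a b" "\<lambda>a b c. pd (\<lambda>y. g y a b) c x" k j] ginv_sym[OF rm x]
    by simp
  have T2: "(\<Sum>i\<in>UNIV. \<Sum>l\<in>UNIV. ginv g x i l * pd (pd (\<lambda>y. g y i l) j) k x)
      = (\<Sum>i\<in>UNIV. \<Sum>l\<in>UNIV. ginv g x i l * pd (pd (\<lambda>y. g y i l) k) j x)"
    by (intro sum.cong refl) (simp add: dg_schwarz[OF rm x, of _ _ j k])
  have "Ric g j k x - Ric g k j x = 0"
    unfolding Ric_diff_eq[OF x] dF[OF x] using T1 T2 by (simp add: sum.distrib)
  then show ?thesis by simp
qed

end



lemma sum_assoc2:
  fixes a :: "'i \<Rightarrow> real" and b :: "'i \<Rightarrow> 'j \<Rightarrow> real"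
  assumes "finite I" "finite J"
  shows "(\<Sum>i\<in>I. a i * (\<Sum>j\<in>J. b i j * c j)) = (\<Sum>j\<in>J. (\<Sum>i\<in>I. a i * b i j) * c j)"
proof -
  have "(\<Sum>i\<in>I. a i * (\<Sum>j\<in>J. b i j * c j)) = (\<Sum>i\<in>I. \<Sum>j\<in>J. a i * b i j * c j)"
    by (simp add: sum_distrib_left mult.assoc)
  also have "\<dots> = (\<Sum>j\<in>J. \<Sum>i\<in>I. a i * b i j * c j)" by (rule sum.swap)
  also have "\<dots> = (\<Sum>j\<in>J. (\<Sum>i\<in>I. a i * b i j) * c j)" by (simp add: sum_distrib_right)
  finally show ?thesis .
qed

lemma gval_add: "gval g x (U + V) W = gval g x U W + gval g x V W"
  unfolding gval_def by (simp add: algebra_simps sum.distrib)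

lemma gval_diff: "gval g x (U - V) W = gval g x U W - gval g x V W"
  unfolding gval_def by (simp add: algebra_simps sum_subtractf)

lemma gval_scale: "gval g x (c *\<^sub>R U) W = c * gval g x U W"
  unfolding gval_def by (simp add: algebra_simps sum_distrib_left)

lemma gval_zero: "gval g x 0 W = 0"
  unfolding gval_def by simp

lemma oneform_diff: "oneform (\<lambda>y. B y - D y) x V = oneform B x V - oneform D x V"
  unfolding oneform_def by (simp add: algebra_simps sum_subtractf)

lemma oneform_axis: "oneform T x (axis j 1) = T x $ j"
  unfolding oneform_def axis_def by (simp add: sum_delta_r2)

lemma times_if01: "(x::real) * (if P then 1 else 0) = (if P then x else 0)"
  by simp

lemma if01_times: "(if P then 1 else 0) * (x::real) = (if P then x else 0)"
  by simp

lemma ricci_axis: "ricci g x (axis j 1) (axis k 1) = Ric g j k x"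
  unfolding ricci_def axis_def by (simp add: times_if01 if01_times sum.delta sum.delta' cong: if_cong)

context
  fixes U :: "(real^'n) set" and g :: "real^'n \<Rightarrow> 'n \<Rightarrow> 'n \<Rightarrow> real"
  assumes rm: "riemannian_metric U g"
begin

lemma ricci_sym:
  assumes x: "x \<in> U"
  shows "ricci g x V W = ricci g x W V"
proof -
  have "ricci g x V W = (\<Sum>j\<in>UNIV. \<Sum>k\<in>UNIV. Ric g k j x * V$j * W$k)"
    unfolding ricci_def using Ric_sym[OF rm x] by simp
  also have "\<dots> = (\<Sum>k\<in>UNIV. \<Sum>j\<in>UNIV. Ric g k j x * V$j * W$k)" by (rule sum.swap)
  also have "\<dots> = ricci g x W V" unfolding ricci_def by (simp add: mult_ac)
  finally show ?thesis .
qed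

lemma nablaRic_sym:
  assumes x: "x \<in> U"
  shows "nablaRic g i j k x = nablaRic g i k j x"
proof -
  have "pd (\<lambda>y. Ric g j k y) i x = pd (\<lambda>y. Ric g k j y) i x"
    by (rule pd_cong[OF rm_open[OF rm] x]) (rule Ric_sym[OF rm])
  then show ?thesis unfolding nablaRic_def using Ric_sym[OF rm x]
    by (simp add: add.commute)
qed

lemma nabla_ricci_sym:
  assumes x: "x \<in> U"
  shows "nabla_ricci g x X Z W = nabla_ricci g x X W Z"
proof -
  have "nabla_ricci g x X Z W = (\<Sum>i\<in>UNIV. \<Sum>j\<in>UNIV. \<Sum>k\<in>UNIV. nablaRic g i k j x * X$i * Z$j * W$k)"
    unfolding nabla_ricci_def using nablaRic_sym[OF x] by simp
  also have "\<dots> = (\<Sum>i\<in>UNIV. \<Sum>k\<in>UNIV. \<Sum>j\<in>UNIV. nablaRic g i k j x * X$i * Z$j * W$k)"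
    by (intro sum.cong refl sum.swap)
  also have "\<dots> = nabla_ricci g x X W Z" unfolding nabla_ricci_def by (simp add: mult_ac)
  finally show ?thesis .
qed

lemma ricci_op_gval:
  assumes x: "x \<in> U"
  shows "gval g x (ricci_op g x V) W = ricci g x V W"
proof -
  define R where "R j = (\<Sum>k\<in>UNIV. Ric g j k x * V$k)" for j
  have Q: "ricci_op g x V $ i = (\<Sum>j\<in>UNIV. ginv g x i j * R j)" for i
    unfolding ricci_op_def R_def by (simp add: sum_distrib_left mult.assoc)
  have "gval g x (ricci_op g x V) W = (\<Sum>l\<in>UNIV. W$l * (\<Sum>i\<in>UNIV. g x l i * (\<Sum>j\<in>UNIV. ginv g x i j * R j)))"
  proof -
    have "gval g x (ricci_op g x V) W = (\<Sum>i\<in>UNIV. \<Sum>l\<in>UNIV. W$l * (g x l i * (\<Sum>j\<in>UNIV. ginv g x i j * R j)))"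
      unfolding gval_def Q using rm_sym[OF rm x] by (simp add: mult_ac)
    also have "\<dots> = (\<Sum>l\<in>UNIV. \<Sum>i\<in>UNIV. W$l * (g x l i * (\<Sum>j\<in>UNIV. ginv g x i j * R j)))"
      by (rule sum.swap)
    finally show ?thesis by (simp add: sum_distrib_left)
  qed
  also have "\<dots> = (\<Sum>l\<in>UNIV. W$l * (\<Sum>j\<in>UNIV. (\<Sum>i\<in>UNIV. g x l i * ginv g x i j) * R j))"
    by (simp add: sum_assoc2)
  also have "\<dots> = (\<Sum>l\<in>UNIV. W$l * R l)"
    by (simp add: ginv_right[OF rm x] sum_delta_l)
  also have "\<dots> = ricci g x W V"
    unfolding R_def ricci_def by (simp add: sum_distrib_left mult_ac)
  also have "\<dots> = ricci g x V W" by (rule ricci_sym[OF x])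
  finally show ?thesis .
qed

end



lemma final_alg:
  fixes a b c Rb G K l n g1 g2 g3 g4 s1 s2 s3 s4 :: real
  assumes a: "a \<noteq> 0"
    and E: "a * Rb + b * K - c * G = 0"
    and K: "K = s1 * g1 - s2 * g2 + g3 * s3 - g4 * s4"
    and l: "l * a = c"
  shows "Rb = l * G + g1 * (- (b/a) * s1) - g4 * (- (b/a) * s4) + g3 * (- (b/a) * s3) - g2 * (- (b/a) * s2)"
proof -
  have R1: "a * Rb = c * G - b * K" using E by simp
  have R2: "l * G + g1 * (- (b/a) * s1) - g4 * (- (b/a) * s4) + g3 * (- (b/a) * s3) - g2 * (- (b/a) * s2)
      = l * G - (b/a) * K" unfolding K by (simp add: algebra_simps)
  have R3: "a * (l * G - (b/a) * K) = c * G - b * K" using a l by (simp add: algebra_simps)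
  have "a * Rb = a * (l * G - (b/a) * K)" using R1 R3 by simp
  then have "Rb = l * G - (b/a) * K" using a by simp
  then show ?thesis using R2 by simp
qed

theorem corollary2p1:
  fixes U :: "(real^'n) set"
    and g :: "real^'n \<Rightarrow> 'n \<Rightarrow> 'n \<Rightarrow> real"
    and A B D :: "real^'n \<Rightarrow> real^'n"
    and a b :: real
  assumes "CARD('n) > 3"
    and "U \<noteq> {}"
    and "riemannian_metric U g"
    and "non_flat U g"
    and "weakly_ricci_symmetric U g A B D"
    and "a \<noteq> 0"
    and "quasi_conformally_flat U g a b"
    and "\<forall>x\<in>U. scal g x \<noteq> 0"
    and "\<forall>x\<in>U. B x - D x \<noteq> 0"
  shows "\<forall>x\<in>U. \<forall>X Y Z W.
    (let n = real CARD('n);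
         T = (\<lambda>y. B y - D y);
         \<rho> = dual_vec g T x;
         l = scal g x / n * (1 / (n - 1) + 2 * b / a);
         \<delta> = - (b / a) * (scal g x / oneform T x \<rho>);
         P = (\<lambda>V1 V2. \<delta> * (oneform B x V1 * oneform B x V2 - oneform B x V1 * oneform D x V2
                             - oneform D x V1 * oneform B x V2 + oneform D x V1 * oneform D x V2))
     in Rbar g x X Y Z W =
          l * (gval g x Y Z * gval g x X W - gval g x X Z * gval g x Y W)
          + gval g x X W * P Y Z - gval g x X Z * P Y W
          + gval g x Y Z * P X W - gval g x Y W * P X Z)"
proof (intro ballI allI)
  fix x X Y Z W
  assume x: "x \<in> U"
  have rm: "riemannian_metric U g" by (rule assms(3))
  define Tf where "Tf V = oneform B x V - oneform D x V" for V
  define \<rho> where "\<rho> = dual_vec g (\<lambda>y. B y - D y) x"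
  define \<tau> where "\<tau> = oneform (\<lambda>y. B y - D y) x \<rho>"
  have Tf_eq: "\<And>V. oneform (\<lambda>y. B y - D y) x V = Tf V" by (simp add: Tf_def oneform_diff)
  have w: "\<And>X Z W. nabla_ricci g x X Z W = oneform A x X * ricci g x Z W + oneform B x Z * ricci g x X W + oneform D x W * ricci g x X Z"
    using assms(5) x unfolding weakly_ricci_symmetric_def by blast
  have TS: "Tf Z' * ricci g x X' W' = Tf W' * ricci g x X' Z'" for X' Z' W'
  proof -
    have e: "oneform A x X' * ricci g x Z' W' + oneform B x Z' * ricci g x X' W' + oneform D x W' * ricci g x X' Z'
        = oneform A x X' * ricci g x Z' W' + oneform B x W' * ricci g x X' Z' + oneform D x Z' * ricci g x X' W'"
      using w[of X' Z' W'] w[of X' W' Z'] nabla_ricci_sym[OF rm x, of X' Z' W'] ricci_sym[OF rm x, of W' Z'] by simp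
    show ?thesis unfolding Tf_def left_diff_distrib using e by linarith
  qed
  have rho_i: "\<And>i. \<rho> $ i = (\<Sum>j\<in>UNIV. ginv g x i j * (B x - D x) $ j)"
    unfolding \<rho>_def dual_vec_def by simp
  have Grho: "(\<Sum>l\<in>UNIV. g x i l * \<rho> $ l) = (B x - D x) $ i" for i
  proof -
    have "(\<Sum>l\<in>UNIV. g x i l * \<rho> $ l) = (\<Sum>j\<in>UNIV. (\<Sum>l\<in>UNIV. g x i l * ginv g x l j) * (B x - D x) $ j)"
      unfolding rho_i by (rule sum_assoc2) auto
    also have "\<dots> = (B x - D x) $ i" by (simp add: ginv_right[OF rm x] sum_delta_l)
    finally show ?thesis .
  qed
  have rho_ne: "\<rho> \<noteq> 0"
  proof
    assume "\<rho> = 0"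
    then have "(B x - D x) $ i = 0" for i using Grho[of i] by simp
    then have "B x - D x = 0" by (simp add: vec_eq_iff)
    then show False using assms(9) x by blast
  qed
  have tau_q: "\<tau> = (\<Sum>i\<in>UNIV. \<Sum>j\<in>UNIV. g x i j * \<rho>$i * \<rho>$j)"
  proof -
    have "\<tau> = (\<Sum>i\<in>UNIV. (\<Sum>l\<in>UNIV. g x i l * \<rho> $ l) * \<rho> $ i)"
      unfolding \<tau>_def oneform_def Grho by simp
    then show ?thesis by (simp add: sum_distrib_left mult_ac)
  qed
  have tau_pos: "\<tau> > 0" unfolding tau_q by (rule rm_pos[OF rm x rho_ne])
  have tau_T: "(\<Sum>j\<in>UNIV. \<Sum>k\<in>UNIV. ginv g x j k * (B x - D x) $ j * (B x - D x) $ k) = \<tau>"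
    unfolding \<tau>_def oneform_def rho_i by (simp add: sum_distrib_left mult_ac)
  have Tf_rho: "Tf \<rho> = \<tau>" using Tf_eq \<tau>_def by simp
  \<comment> \<open>the Ricci tensor has rank one\<close>
  define \<kappa> where "\<kappa> = ricci g x \<rho> \<rho> / (\<tau> * \<tau>)"
  have S1: "ricci g x X' Z' = Tf Z' * ricci g x X' \<rho> / \<tau>" for X' Z'
    using TS[of Z' X' \<rho>] Tf_rho tau_pos by (simp add: field_simps)
  have S2: "ricci g x X' Z' = Tf X' * Tf Z' * \<kappa>" for X' Z'
  proof -
    have "ricci g x X' \<rho> = ricci g x \<rho> X'" by (rule ricci_sym[OF rm x])
    also have "\<dots> = Tf X' * ricci g x \<rho> \<rho> / \<tau>" by (rule S1)
    finally show ?thesis using S1[of X' Z'] tau_pos by (simp add: \<kappa>_def field_simps)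
  qed
  have Tf_axis: "Tf (axis j 1) = (B x - D x) $ j" for j
    unfolding Tf_def oneform_axis by simp
  have gam: "scal g x = \<kappa> * \<tau>"
  proof -
    have "scal g x = (\<Sum>j\<in>UNIV. \<Sum>k\<in>UNIV. ginv g x j k * ricci g x (axis j 1) (axis k 1))"
      unfolding scal_def ricci_axis ..
    also have "\<dots> = \<kappa> * (\<Sum>j\<in>UNIV. \<Sum>k\<in>UNIV. ginv g x j k * (B x - D x) $ j * (B x - D x) $ k)"
      unfolding S2 Tf_axis by (simp add: sum_distrib_left mult_ac)
    finally show ?thesis using tau_T by simp
  qed
  have S3: "ricci g x X' Z' = scal g x / \<tau> * Tf X' * Tf Z'" for X' Z'
    using S2[of X' Z'] gam tau_pos by simp
  define n where "n = real CARD('n)"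
  define c where "c = scal g x / n * (a / (n - 1) + 2 * b)"
  have n1: "n - 1 \<noteq> 0" using assms(1) by (simp add: n_def)
  have n0: "n \<noteq> 0" using assms(1) by (simp add: n_def)
  have qc0: "qc_curv g a b x X Y Z = 0" using assms(7) x unfolding quasi_conformally_flat_def by blast
  have E: "a * Rbar g x X Y Z W
      + b * (ricci g x Y Z * gval g x X W - ricci g x X Z * gval g x Y W + gval g x Y Z * ricci g x X W - gval g x X Z * ricci g x Y W)
      - c * (gval g x Y Z * gval g x X W - gval g x X Z * gval g x Y W) = 0"
  proof -
    have "gval g x (qc_curv g a b x X Y Z) W = 0" using qc0 gval_zero by simp
    then show ?thesis
      unfolding qc_curv_def Rbar_def c_def n_def
      by (simp add: gval_add gval_diff gval_scale ricci_op_gval[OF rm x] algebra_simps)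
  qed
  have P_eq: "\<And>V1 V2. - (b / a) * (scal g x / \<tau>) * (oneform B x V1 * oneform B x V2 - oneform B x V1 * oneform D x V2
                             - oneform D x V1 * oneform B x V2 + oneform D x V1 * oneform D x V2)
        = - (b/a) * ricci g x V1 V2"
  proof -
    fix V1 V2
    have f: "oneform B x V1 * oneform B x V2 - oneform B x V1 * oneform D x V2
                             - oneform D x V1 * oneform B x V2 + oneform D x V1 * oneform D x V2 = Tf V1 * Tf V2"
      unfolding Tf_def by (simp add: algebra_simps)
    show "- (b / a) * (scal g x / \<tau>) * (oneform B x V1 * oneform B x V2 - oneform B x V1 * oneform D x V2
                             - oneform D x V1 * oneform B x V2 + oneform D x V1 * oneform D x V2)
        = - (b/a) * ricci g x V1 V2"
      unfolding f S3 by (simp add: mult_ac)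
  qed
  have l_eq: "scal g x / n * (1 / (n - 1) + 2 * b / a) * a = c"
    unfolding c_def using assms(6) n1 n0 by (simp add: field_simps)
  show "let n = real CARD('n);
         T = (\<lambda>y. B y - D y);
         \<rho> = dual_vec g T x;
         l = scal g x / n * (1 / (n - 1) + 2 * b / a);
         \<delta> = - (b / a) * (scal g x / oneform T x \<rho>);
         P = (\<lambda>V1 V2. \<delta> * (oneform B x V1 * oneform B x V2 - oneform B x V1 * oneform D x V2
                             - oneform D x V1 * oneform B x V2 + oneform D x V1 * oneform D x V2))
     in Rbar g x X Y Z W =
          l * (gval g x Y Z * gval g x X W - gval g x X Z * gval g x Y W)
          + gval g x X W * P Y Z - gval g x X Z * P Y W
          + gval g x Y Z * P X W - gval g x Y W * P X Z"
    unfolding Let_def n_def[symmetric] \<rho>_def[symmetric] \<tau>_def[symmetric] P_eq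
    by (rule final_alg[OF assms(6) E refl l_eq])
qed


end
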